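(* For every $n$-dimensional Hilbert space $\mathcal H$ and every $N\ge n$, the set $\mathcal F^{(1)}$ of $1$-erasure optimal $(N,n)$ dual pairs under the Frobenius norm is nonempty.
   Context: $\mathcal H$ is a complex Hilbert space of finite dimension $n$, inner product linear in the first argument. A finite sequence $F=\{f_i\}_{i=1}^N$ in $\mathcal H$ is a frame if there are constants $0<A\le B$ with $A\|f\|^2\le\sum_{i=1}^N|\langle f,f_i\rangle|^2\le B\|f\|^2$ for all $f$. A sequence $G=\{g_i\}_{i=1}^N$ is a dual of the frame $F$ if $f=\sum_{i=1}^N\langle f,g_i\rangle f_i$ for all $f\in\mathcal H$; then $(F,G)$ is an $(N,n)$ dual pair. The error operator for $\Lambda\subseteq\{1,\dots,N\}$ is $E_{\Lambda,F,G}f=\sum_{i\in\Lambda}\langle f,f_i\rangle g_i$. With $\|T\|_{\mathcal F}=\sqrt{\operatorname{tr}(T^*T)}$, set $\epsilon^{(1)}_{F,G}=\max_{1\le i\le N}\|E_{\{i\},F,G}\|_{\mathcal F}$, $\epsilon^{(1)}=\inf\{\epsilon^{(1)}_{F,G}:(F,G)\text{ an }(N,n)\text{ dual pair}\}$ and $\mathcal F^{(1)}=\{(F,G):\epsilon^{(1)}_{F,G}=\epsilon^{(1)}\}$. *)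

theory Defs
  imports "HOL-Analysis.Analysis"
begin

text \<open>The n-dimensional complex Hilbert space is modelled as complex^'n with
  n = CARD('n) and the standard inner product, linear in the first argument.
  Sequences of length N are functions on nat, of which only indices 0..N-1 are used.\<close>

definition cinner :: "complex^'n \<Rightarrow> complex^'n \<Rightarrow> complex" where
  "cinner x y = (\<Sum>j\<in>UNIV. x$j * cnj (y$j))"

definition is_frame :: "nat \<Rightarrow> (nat \<Rightarrow> complex^'n) \<Rightarrow> bool" where
  "is_frame N F \<longleftrightarrow> (\<exists>A B. 0 < A \<and> A \<le> B \<and>
     (\<forall>f. A * (norm f)^2 \<le> (\<Sum>i<N. (cmod (cinner f (F i)))^2) \<and>
          (\<Sum>i<N. (cmod (cinner f (F i)))^2) \<le> B * (norm f)^2))"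

definition is_dual :: "nat \<Rightarrow> (nat \<Rightarrow> complex^'n) \<Rightarrow> (nat \<Rightarrow> complex^'n) \<Rightarrow> bool" where
  "is_dual N F G \<longleftrightarrow> (\<forall>f. f = (\<Sum>i<N. cinner f (G i) *s F i))"

definition dual_pair :: "nat \<Rightarrow> (nat \<Rightarrow> complex^'n) \<Rightarrow> (nat \<Rightarrow> complex^'n) \<Rightarrow> bool" where
  "dual_pair N F G \<longleftrightarrow> is_frame N F \<and> is_dual N F G"

definition err_op :: "nat set \<Rightarrow> (nat \<Rightarrow> complex^'n) \<Rightarrow> (nat \<Rightarrow> complex^'n) \<Rightarrow> complex^'n \<Rightarrow> complex^'n" where
  "err_op L F G f = (\<Sum>i\<in>L. cinner f (F i) *s G i)"

definition op_matrix :: "(complex^'n \<Rightarrow> complex^'n) \<Rightarrow> complex^'n^'n" where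
  "op_matrix T = (\<chi> i j. (T (axis j 1))$i)"

definition cadjoint :: "complex^'n^'n \<Rightarrow> complex^'n^'n" where
  "cadjoint A = (\<chi> i j. cnj (A$j$i))"

definition frob_norm :: "(complex^'n \<Rightarrow> complex^'n) \<Rightarrow> real" where
  "frob_norm T = sqrt (Re (trace (cadjoint (op_matrix T) ** op_matrix T)))"

definition eps1_pair :: "nat \<Rightarrow> (nat \<Rightarrow> complex^'n) \<Rightarrow> (nat \<Rightarrow> complex^'n) \<Rightarrow> real" where
  "eps1_pair N F G = Max ((\<lambda>i. frob_norm (err_op {i} F G)) ` {..<N})"

definition eps1 :: "nat \<Rightarrow> ('n::finite) itself \<Rightarrow> real" where
  "eps1 N _ = Inf {eps1_pair N F G | F G :: nat \<Rightarrow> complex^'n. dual_pair N F G}"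

definition optimal1 :: "nat \<Rightarrow> ((nat \<Rightarrow> complex^'n) \<times> (nat \<Rightarrow> complex^'n)) set" where
  "optimal1 N = {(F, G). dual_pair N F G \<and> eps1_pair N F G = eps1 N TYPE('n)}"

end

theory Submission imports Defs begin

lemma cinner_axis: "cinner (axis b 1) x = cnj (x$b)"
proof -
  have "cinner (axis b 1) x = (\<Sum>j\<in>UNIV. if j = b then cnj (x$j) else 0)"
    unfolding cinner_def axis_def by (intro sum.cong) auto
  thus ?thesis by simp
qed

lemma norm_sq: "(norm (x::complex^'n))^2 = (\<Sum>j\<in>UNIV. (cmod (x$j))^2)"
  by (simp add: norm_vec_def L2_set_def sum_nonneg)

lemma err_op_single: "err_op {i} F G = (\<lambda>f. cinner f (F i) *s G i)"
  by (simp add: err_op_def fun_eq_iff)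

lemma sqn: "(complex_of_real (cmod z))^2 = z * cnj z"
  by (metis complex_norm_square of_real_power)

lemma frob_rank1: "frob_norm (\<lambda>f. cinner f u *s v) = norm (u::complex^'n) * norm (v::complex^'n)"
proof -
  have "trace (cadjoint (op_matrix (\<lambda>f. cinner f u *s v)) ** op_matrix (\<lambda>f. cinner f u *s v))
     = (\<Sum>k\<in>UNIV. \<Sum>a\<in>UNIV. complex_of_real ((cmod (u$k))^2 * (cmod (v$a))^2))"
    unfolding trace_def cadjoint_def op_matrix_def matrix_matrix_mult_def
    apply (simp add: cinner_axis)
    apply (intro sum.cong refl)
    apply (simp only: sqn)
    apply (simp add: mult_ac)
    done
  also have "\<dots> = complex_of_real ((norm u)^2 * (norm v)^2)"
    by (simp add: norm_sq sum_distrib_left sum_distrib_right) (rule sum.swap)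
  finally show ?thesis unfolding frob_norm_def
    by (simp add: real_sqrt_mult)
qed

lemma cinner_bound: "cmod (cinner u v) \<le> norm (u::complex^'n) * norm v"
proof -
  have "cmod (cinner u v) \<le> (\<Sum>j\<in>UNIV. \<bar>cmod (u$j)\<bar> * \<bar>cmod (v$j)\<bar>)"
    unfolding cinner_def by (rule order_trans[OF norm_sum]) (simp add: norm_mult)
  also have "\<dots> \<le> norm u * norm v"
    unfolding norm_vec_def by (rule L2_set_mult_ineq)
  finally show ?thesis .
qed

lemma trace_identity:
  assumes "is_dual N F G"
  shows "of_nat CARD('n::finite) = (\<Sum>i<N. cinner (F i) (G i :: complex^'n))"
proof -
  have k: "1 = (\<Sum>i<N. F i $ k * cnj (G i $ k))" for k :: 'n
  proof -
    have "axis k 1 = (\<Sum>i<N. cinner (axis k 1) (G i) *s F i)"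
      using assms unfolding is_dual_def by blast
    hence "axis k 1 $ k = (\<Sum>i<N. cinner (axis k 1) (G i) *s F i) $ k" by simp
    thus ?thesis by (simp add: cinner_axis sum_component mult.commute)
  qed
  have "of_nat CARD('n) = (\<Sum>k\<in>(UNIV::'n set). (1::complex))" by simp
  also have "\<dots> = (\<Sum>k\<in>UNIV. \<Sum>i<N. F i $ k * cnj (G i $ k))" using k by simp
  also have "\<dots> = (\<Sum>i<N. cinner (F i) (G i))"
    unfolding cinner_def by (rule sum.swap)
  finally show ?thesis .
qed


lemma eps1_pair_eq: "eps1_pair N F G = Max ((\<lambda>i. norm (F i) * norm (G i)) ` {..<N})"
  unfolding eps1_pair_def err_op_single frob_rank1 ..

lemma lower:
  assumes "dual_pair N F G" "0 < N"
  shows "real CARD('n::finite) \<le> real N * eps1_pair N F (G :: nat \<Rightarrow> complex^'n)"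
proof -
  have "real CARD('n) = cmod (\<Sum>i<N. cinner (F i) (G i))"
    using trace_identity[of N F G] assms(1) unfolding dual_pair_def
    by (metis norm_of_nat)
  also have "\<dots> \<le> (\<Sum>i<N. norm (F i) * norm (G i))"
    by (rule order_trans[OF norm_sum]) (intro sum_mono cinner_bound)
  also have "\<dots> \<le> (\<Sum>i<N. eps1_pair N F G)"
    unfolding eps1_pair_eq by (intro sum_mono Max_ge) auto
  also have "\<dots> = real N * eps1_pair N F G" by simp
  finally show ?thesis .
qed

lemma roots_sum:
  fixes d :: int
  assumes "0 < N" "\<bar>d\<bar> < int N"
  shows "(\<Sum>i<N. exp (2 * pi * \<i> * of_int d / of_nat N) ^ i) = (if d = 0 then of_nat N else 0)"
proof (cases "d = 0")
  case True thus ?thesis by simp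
next
  case False
  let ?z = "exp (2 * pi * \<i> * of_int d / of_nat N)"
  have "?z \<noteq> 1"
  proof
    assume "?z = 1"
    then obtain m :: int where m: "2 * pi * of_int d / of_nat N = of_int (2*m) * pi"
      unfolding exp_eq_1 by auto
    hence "of_int d = of_int m * (of_nat N :: real)" using assms(1)
      by (simp add: field_simps)
    hence "d = m * int N" by (metis of_int_eq_iff of_int_mult of_int_of_nat_eq)
    hence "m \<noteq> 0" using False by auto
    hence "\<bar>d\<bar> \<ge> int N" using \<open>d = m * int N\<close>
      by (simp add: abs_mult mult_le_cancel_right1 int_one_le_iff_zero_less)
    thus False using assms(2) by simp
  qed
  moreover have "?z ^ N = 1"
  proof -
    have "?z ^ N = exp (of_nat N * (2 * pi * \<i> * of_int d / of_nat N))"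
      by (simp only: exp_of_nat_mult)
    also have "of_nat N * (2 * pi * \<i> * of_int d / of_nat N) = 2 * pi * \<i> * of_int d"
      using assms(1) by simp
    also have "exp (2 * pi * \<i> * of_int d) = 1"
      unfolding exp_eq_1 by (intro conjI exI[of _ d]) simp_all
    finally show ?thesis .
  qed
  ultimately show ?thesis using False by (simp add: sum_gp_strict)
qed


lemma orth:
  fixes idx :: "'n::finite \<Rightarrow> nat"
  assumes idx: "bij_betw idx UNIV {0..<CARD('n)}" and N: "CARD('n) \<le> N"
  defines "h \<equiv> \<lambda>i. (\<chi> j. exp (2 * pi * \<i> * of_nat (i * idx j) / of_nat N) / of_real (sqrt (real N))) :: complex^'n"
  shows "(\<Sum>i<N. cnj (h i $ a) * h i $ b) = (if a = b then 1 else 0)"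
proof -
  have N0: "0 < N" using N zero_less_card_finite[where 'a='n] by linarith
  define d where "d = int (idx b) - int (idx a)"
  have ia: "idx a < CARD('n)" "idx b < CARD('n)" using idx by (auto simp: bij_betw_def)
  have dN: "\<bar>d\<bar> < int N" using ia N unfolding d_def by linarith
  have d0: "d = 0 \<longleftrightarrow> a = b"
    using idx unfolding d_def bij_betw_def inj_on_def by auto
  have tm: "cnj (h i $ a) * h i $ b = exp (2 * pi * \<i> * of_int d / of_nat N) ^ i / of_nat N" for i
  proof -
    have "cnj (h i $ a) * h i $ b =
      exp (cnj (2 * pi * \<i> * of_nat (i * idx a) / of_nat N)) * exp (2 * pi * \<i> * of_nat (i * idx b) / of_nat N)
        / (of_real (sqrt (real N)) * of_real (sqrt (real N)))"
      unfolding h_def by (simp add: exp_cnj)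
    also have "exp (cnj (2 * pi * \<i> * of_nat (i * idx a) / of_nat N)) * exp (2 * pi * \<i> * of_nat (i * idx b) / of_nat N)
        = exp (of_nat i * (2 * pi * \<i> * of_int d / of_nat N))"
    proof -
      have "cnj (2 * pi * \<i> * of_nat (i * idx a) / of_nat N) = - (2 * pi * \<i> * of_nat (i * idx a) / (of_nat N :: complex))"
        by simp
      moreover have "- (2 * pi * \<i> * of_nat (i * idx a) / (of_nat N :: complex)) + 2 * pi * \<i> * of_nat (i * idx b) / of_nat N
          = of_nat i * (2 * pi * \<i> * of_int d / of_nat N)"
        unfolding d_def of_nat_mult by (simp add: algebra_simps add_divide_distrib[symmetric] diff_divide_distrib[symmetric])
      ultimately show ?thesis by (simp add: mult_exp_exp)
    qed
    also have "\<dots> = exp (2 * pi * \<i> * of_int d / of_nat N) ^ i" by (rule exp_of_nat_mult)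
    also have "of_real (sqrt (real N)) * of_real (sqrt (real N)) = (of_nat N :: complex)"
      by (simp flip: of_real_mult)
    finally show ?thesis .
  qed
  have "(\<Sum>i<N. cnj (h i $ a) * h i $ b) = (\<Sum>i<N. exp (2 * pi * \<i> * of_int d / of_nat N) ^ i) / of_nat N"
    by (simp add: tm sum_divide_distrib)
  also have "\<dots> = (if a = b then 1 else 0)"
    using roots_sum[OF N0 dN] d0 N0 by simp
  finally show ?thesis .
qed


lemma main:
  fixes idx :: "'n::finite \<Rightarrow> nat"
  assumes idx: "bij_betw idx UNIV {0..<CARD('n)}" and N: "CARD('n) \<le> N"
  defines "h \<equiv> \<lambda>i. (\<chi> j. exp (2 * pi * \<i> * of_nat (i * idx j) / of_nat N) / of_real (sqrt (real N))) :: complex^'n"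
  shows "(h, h) \<in> optimal1 N"
proof -
  have N0: "0 < N" using N zero_less_card_finite[where 'a='n] by linarith
  have o: "(\<Sum>i<N. cnj (h i $ a) * h i $ b) = (if a = b then 1 else 0)" for a b
    unfolding h_def by (rule orth[OF idx N])
  have dual: "is_dual N h h"
    unfolding is_dual_def
  proof
    fix f :: "complex^'n"
    show "f = (\<Sum>i<N. cinner f (h i) *s h i)"
    proof (rule vec_eq_iff[THEN iffD2], rule allI)
      fix k
      have "(\<Sum>i<N. cinner f (h i) *s h i) $ k = (\<Sum>i<N. \<Sum>j\<in>UNIV. f$j * (cnj (h i $ j) * h i $ k))"
        by (simp add: sum_component cinner_def sum_distrib_left mult_ac)
      also have "\<dots> = (\<Sum>j\<in>UNIV. f$j * (\<Sum>i<N. cnj (h i $ j) * h i $ k))"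
        by (subst sum.swap) (simp add: sum_distrib_left)
      also have "\<dots> = (\<Sum>j\<in>UNIV. if j = k then f$j else 0)"
        by (intro sum.cong) (simp_all add: o)
      also have "\<dots> = f$k" by simp
      finally show "f $ k = (\<Sum>i<N. cinner f (h i) *s h i) $ k" by simp
    qed
  qed
  have pars: "(\<Sum>i<N. (cmod (cinner f (h i)))^2) = (norm f)^2" for f :: "complex^'n"
  proof -
    have "complex_of_real (\<Sum>i<N. (cmod (cinner f (h i)))^2)
        = (\<Sum>i<N. cinner f (h i) * cnj (cinner f (h i)))"
      by (simp add: sqn)
    also have "\<dots> = (\<Sum>i<N. \<Sum>j\<in>UNIV. \<Sum>l\<in>UNIV. f$j * cnj (f$l) * (cnj (h i $ j) * h i $ l))"
      apply (simp add: cinner_def sum_distrib_left sum_distrib_right mult_ac)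
      apply (rule sum.cong[OF refl])
      apply (rule sum.swap)
      done
    also have "\<dots> = (\<Sum>j\<in>UNIV. \<Sum>l\<in>UNIV. f$j * cnj (f$l) * (\<Sum>i<N. cnj (h i $ j) * h i $ l))"
      apply (rule trans[OF sum.swap])
      apply (rule sum.cong[OF refl])
      apply (rule trans[OF sum.swap])
      apply (simp add: sum_distrib_left)
      done
    also have "\<dots> = (\<Sum>j\<in>UNIV. f$j * cnj (f$j))"
      by (intro sum.cong refl) (simp add: o if_distrib cong: if_cong)
    also have "\<dots> = complex_of_real ((norm f)^2)"
      by (simp add: norm_sq sqn)
    finally show ?thesis using of_real_eq_iff by blast
  qed
  have frame: "is_frame N h"
    unfolding is_frame_def by (intro exI[of _ 1]) (simp add: pars)
  have hn: "norm (h i) * norm (h i) = real CARD('n) / real N" for i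
  proof -
    have "cmod (h i $ j) ^ 2 = 1 / real N" for j
      unfolding h_def using N0 by (simp add: norm_divide power_divide)
    hence "norm (h i) ^ 2 = real CARD('n) / real N" by (simp add: norm_sq)
    thus ?thesis by (simp add: power2_eq_square)
  qed
  have e: "eps1_pair N h h = real CARD('n) / real N"
  proof -
    have "(\<lambda>i. norm (h i) * norm (h i)) ` {..<N} = {real CARD('n) / real N}"
      using N0 hn by auto
    thus ?thesis unfolding eps1_pair_eq by simp
  qed
  have dp: "dual_pair N h h" using dual frame unfolding dual_pair_def by simp
  have "eps1 N TYPE('n) = real CARD('n) / real N"
    unfolding eps1_def
  proof (rule cInf_eq_minimum)
    show "real CARD('n) / real N \<in> {eps1_pair N F G |F G :: nat \<Rightarrow> complex^'n. dual_pair N F G}"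
      using dp e by force
  next
    fix x assume "x \<in> {eps1_pair N F G |F G :: nat \<Rightarrow> complex^'n. dual_pair N F G}"
    then obtain F G :: "nat \<Rightarrow> complex^'n" where "dual_pair N F G" "x = eps1_pair N F G" by blast
    with lower[OF _ N0] have "real CARD('n) \<le> real N * x" by blast
    thus "real CARD('n) / real N \<le> x" using N0 by (simp add: divide_le_eq mult.commute)
  qed
  thus ?thesis unfolding optimal1_def using dp e by simp
qed

theorem corollary3p3:
  fixes N :: nat
  assumes "CARD('n::finite) \<le> N"
  shows "(optimal1 N :: ((nat \<Rightarrow> complex^'n) \<times> (nat \<Rightarrow> complex^'n)) set) \<noteq> {}"
proof -
  obtain idx :: "'n \<Rightarrow> nat" where "bij_betw idx UNIV {0..<card (UNIV::'n set)}"
    using ex_bij_betw_finite_nat[of "UNIV::'n set"] by auto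
  from main[OF this assms] show ?thesis by blast
qed

end
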